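(* Let $f(\cdot;\theta_A)$, $\theta_A\in\mathbb R^{M_A}$ (model A), and $g(\cdot;\theta_B)$, $\theta_B\in\mathbb R^{M_B}$ (model B), be models on $\mathbb R^d$, and suppose there exists a critical mapping $\mathcal P:\mathbb R^{M_A}\to\mathbb R^{M_B}$ from model A to model B. Then for every $f^*\in\mathcal F_A=\{f(\cdot;\theta_A):\theta_A\in\mathbb R^{M_A}\}$ we have $f^*\in\mathcal F_B$ and $O_g(f^* )\leq O_f(f^* )\leq M_A$.
   Context: A model is a map $h:\mathbb R^d\times\mathbb R^M\to\mathbb R$, $(x,\theta)\mapsto h(x;\theta)=h_\theta(x)$, differentiable in both $x$ and $\theta$; its function space is $\{h_\theta:\theta\in\mathbb R^M\}$. A map $\mathcal P:\mathbb R^{M_A}\to\mathbb R^{M_B}$ is a critical mapping from model A ($f$) to model B ($g$) if for every $\theta\in\mathbb R^{M_A}$: (i) $f(\cdot;\theta)=g(\cdot;\mathcal P(\theta))$; (ii) for every finite dataset $S=\{(x_i,y_i)\}_{i=1}^n\subset\mathbb R^d\times\mathbb R$ with mean-squared risk $R_S(h)=\frac12\sum_{i=1}^n(h(x_i)-y_i)^2$, if the gradient of $\theta_A\mapsto R_S(f(\cdot;\theta_A))$ vanishes at $\theta$, then the gradient of $\theta_B\mapsto R_S(g(\cdot;\theta_B))$ vanishes at $\mathcal P(\theta)$. The loss $\ell:\mathbb R\times\mathbb R\to[0,\infty)$ is continuously differentiable with $\ell(u,v)=0$ iff $u=v$. For a model $h$ and $f^*$ in its function space, the target set is $\mathcal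 M_{f^*}=\{\theta:h_\theta=f^*\}$; a dataset from $f^*$ of size $n$ is $\{(x_i,f^*(x_i))\}_{i=1}^n$ with empirical loss $\frac1n\sum_i\ell(u(x_i),f^*(x_i))$ for a function $u$ (identically $0$ if $n=0$); the tangent hyperplane at $\theta'$ is $\{h(\cdot;\theta')+a^\top\nabla_\theta h(\cdot;\theta'):a\in\mathbb R^M\}$; $f^*$ has $n$-sample LLR-guarantee (for model $h$) if there are a dataset of size $n$ from $f^*$ and $\theta'\in\mathcal M_{f^*}$ such that the set of minimizers of the empirical loss over the tangent hyperplane at $\theta'$ is exactly $\{f^*\}$. The optimistic sample size $O_h(f^* )$ is the smallest $n\geq0$ such that $f^*$ has $n$-sample LLR-guarantee for model $h$. *)

theory Defs
  imports "HOL-Analysis.Analysis" "HOL-Library.Extended_Nat"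
begin

text \<open>A model h(x;theta) with inputs x in R^d (type real^'d) and parameters
theta in R^M (type real^'m, M = CARD('m)), differentiable in x and in theta.\<close>
definition is_model :: "(real^'d \<Rightarrow> real^'m \<Rightarrow> real) \<Rightarrow> bool" where
  "is_model h \<longleftrightarrow>
     (\<forall>x \<theta>. (\<lambda>t. h x t) differentiable (at \<theta>)) \<and>
     (\<forall>x \<theta>. (\<lambda>y. h y \<theta>) differentiable (at x))"

definition fun_space :: "(real^'d \<Rightarrow> real^'m \<Rightarrow> real) \<Rightarrow> (real^'d \<Rightarrow> real) set" where
  "fun_space h = {u. \<exists>\<theta>. u = (\<lambda>x. h x \<theta>)}"

definition sq_risk :: "((real^'d) \<times> real) list \<Rightarrow> (real^'d \<Rightarrow> real) \<Rightarrow> real" where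
  "sq_risk S u = (1/2) * (\<Sum>(x,y)\<leftarrow>S. (u x - y)^2)"

definition critical_mapping ::
  "(real^'d \<Rightarrow> real^'ma \<Rightarrow> real) \<Rightarrow> (real^'d \<Rightarrow> real^'mb \<Rightarrow> real)
    \<Rightarrow> (real^'ma \<Rightarrow> real^'mb) \<Rightarrow> bool" where
  "critical_mapping f g P \<longleftrightarrow>
     (\<forall>\<theta>. (\<lambda>x. f x \<theta>) = (\<lambda>x. g x (P \<theta>))) \<and>
     (\<forall>\<theta> (S::((real^'d) \<times> real) list).
        ((\<lambda>t. sq_risk S (\<lambda>x. f x t)) has_derivative (\<lambda>_. 0)) (at \<theta>) \<longrightarrow>
        ((\<lambda>t. sq_risk S (\<lambda>x. g x t)) has_derivative (\<lambda>_. 0)) (at (P \<theta>)))"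

definition admissible_loss :: "(real \<Rightarrow> real \<Rightarrow> real) \<Rightarrow> bool" where
  "admissible_loss l \<longleftrightarrow>
     (\<exists>l'. (\<forall>p. ((\<lambda>q. l (fst q) (snd q)) has_derivative blinfun_apply (l' p)) (at p))
           \<and> continuous_on UNIV l') \<and>
     (\<forall>u v. l u v \<ge> 0) \<and> (\<forall>u v. l u v = 0 \<longleftrightarrow> u = v)"

text \<open>Empirical loss of u on the dataset from fstar with sample points xs
  (identically 0 when xs is empty, since division by 0 is 0).\<close>
definition emp_loss ::
  "(real \<Rightarrow> real \<Rightarrow> real) \<Rightarrow> (real^'d \<Rightarrow> real) \<Rightarrow> (real^'d) list \<Rightarrow> (real^'d \<Rightarrow> real) \<Rightarrow> real" where
  "emp_loss l fstar xs u = (\<Sum>x\<leftarrow>xs. l (u x) (fstar x)) / real (length xs)"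

definition target_set :: "(real^'d \<Rightarrow> real^'m \<Rightarrow> real) \<Rightarrow> (real^'d \<Rightarrow> real) \<Rightarrow> (real^'m) set" where
  "target_set h fstar = {\<theta>. (\<lambda>x. h x \<theta>) = fstar}"

text \<open>Tangent hyperplane at theta': h(.;theta') + a^T grad_theta h(.;theta'),
  the directional derivative being the Frechet derivative in theta applied to a.\<close>
definition tangent_hyperplane ::
  "(real^'d \<Rightarrow> real^'m \<Rightarrow> real) \<Rightarrow> real^'m \<Rightarrow> (real^'d \<Rightarrow> real) set" where
  "tangent_hyperplane h \<theta>' =
     {u. \<exists>a. u = (\<lambda>x. h x \<theta>' + frechet_derivative (\<lambda>t. h x t) (at \<theta>') a)}"

definition has_LLR_guarantee ::
  "(real \<Rightarrow> real \<Rightarrow> real) \<Rightarrow> (real^'d \<Rightarrow> real^'m \<Rightarrow> real) \<Rightarrow> (real^'d \<Rightarrow> real) \<Rightarrow> nat \<Rightarrow> bool" where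
  "has_LLR_guarantee l h fstar n \<longleftrightarrow>
     (\<exists>xs \<theta>'. length xs = n \<and> \<theta>' \<in> target_set h fstar \<and>
        {u \<in> tangent_hyperplane h \<theta>'. \<forall>v \<in> tangent_hyperplane h \<theta>'.
            emp_loss l fstar xs u \<le> emp_loss l fstar xs v} = {fstar})"

definition optimistic_sample_size ::
  "(real \<Rightarrow> real \<Rightarrow> real) \<Rightarrow> (real^'d \<Rightarrow> real^'m \<Rightarrow> real) \<Rightarrow> (real^'d \<Rightarrow> real) \<Rightarrow> enat" where
  "optimistic_sample_size l h fstar =
     (if \<exists>n. has_LLR_guarantee l h fstar n
      then enat (LEAST n. has_LLR_guarantee l h fstar n) else \<infinity>)"

end

theory Submission imports Defs begin

definition Dv :: "(real^'d \<Rightarrow> real^'m \<Rightarrow> real) \<Rightarrow> real^'m \<Rightarrow> real^'d \<Rightarrow> real^'m" where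
  "Dv h \<theta> x = (\<chi> j. frechet_derivative (\<lambda>t. h x t) (at \<theta>) (axis j 1))"

lemma model_hd:
  assumes "is_model h"
  shows "((\<lambda>t. h x t) has_derivative frechet_derivative (\<lambda>t. h x t) (at \<theta>)) (at \<theta>)"
  using assms unfolding is_model_def by (simp add: frechet_derivative_works)

lemma D_inner:
  assumes "is_model h"
  shows "frechet_derivative (\<lambda>t. h x t) (at \<theta>) a = Dv h \<theta> x \<bullet> a"
proof -
  let ?L = "frechet_derivative (\<lambda>t. h x t) (at \<theta>)"
  have lin: "linear ?L" using model_hd[OF assms] has_derivative_linear by blast
  have "?L a = ?L (\<Sum>i\<in>UNIV. (a$i) *s axis i 1)" by (simp add: basis_expansion)
  also have "\<dots> = (\<Sum>i\<in>UNIV. (a$i) * ?L (axis i 1))"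
    using lin by (simp add: linear_sum linear_scale scalar_mult_eq_scaleR)
  also have "\<dots> = Dv h \<theta> x \<bullet> a"
    by (simp add: Dv_def inner_vec_def mult.commute)
  finally show ?thesis .
qed

lemma span_comb:
  fixes V :: "'x \<Rightarrow> real^'m"
  assumes "finite X" "w \<in> span (V ` X)"
  shows "\<exists>c. w = (\<Sum>x\<in>X. c x *\<^sub>R V x)"
proof -
  show ?thesis
  proof (rule span_induct[OF assms(2)])
    show "subspace {w. \<exists>c. w = (\<Sum>x\<in>X. c x *\<^sub>R V x)}"
    proof (rule subspaceI)
      show "0 \<in> {w. \<exists>c. w = (\<Sum>x\<in>X. c x *\<^sub>R V x)}"
        by (rule CollectI, rule exI[of _ "\<lambda>_. 0"]) simp
    next
      fix u v assume "u \<in> {w. \<exists>c. w = (\<Sum>x\<in>X. c x *\<^sub>R V x)}" "v \<in> {w. \<exists>c. w = (\<Sum>x\<in>X. c x *\<^sub>R V x)}"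
      then obtain c d where "u = (\<Sum>x\<in>X. c x *\<^sub>R V x)" "v = (\<Sum>x\<in>X. d x *\<^sub>R V x)" by auto
      then show "u + v \<in> {w. \<exists>c. w = (\<Sum>x\<in>X. c x *\<^sub>R V x)}"
        by (intro CollectI exI[of _ "\<lambda>x. c x + d x"]) (simp add: sum.distrib scaleR_add_left)
    next
      fix r :: real and u assume "u \<in> {w. \<exists>c. w = (\<Sum>x\<in>X. c x *\<^sub>R V x)}"
      then obtain c where "u = (\<Sum>x\<in>X. c x *\<^sub>R V x)" by auto
      then show "r *\<^sub>R u \<in> {w. \<exists>c. w = (\<Sum>x\<in>X. c x *\<^sub>R V x)}"
        by (intro CollectI exI[of _ "\<lambda>x. r * c x"]) (simp add: scaleR_sum_right)
    qed
  next
    fix v assume "v \<in> V ` X"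
    then obtain y where y: "y \<in> X" "v = V y" by auto
    show "\<exists>c. v = (\<Sum>x\<in>X. c x *\<^sub>R V x)"
      apply (rule exI[of _ "\<lambda>x. if x = y then 1 else 0"])
    proof -
      have "(\<Sum>x\<in>X. (if x = y then 1 else 0) *\<^sub>R V x) = (\<Sum>x\<in>X. if x = y then V x else 0)"
        by (rule sum.cong) auto
      then show "v = (\<Sum>x\<in>X. (if x = y then 1 else 0) *\<^sub>R V x)"
        using y assms(1) by (simp add: sum.delta)
    qed
  qed
qed

lemma ker_span:
  fixes V :: "'x \<Rightarrow> real^'m"
  assumes "\<And>a. (\<forall>x\<in>X. V x \<bullet> a = 0) \<Longrightarrow> w \<bullet> a = 0"
  shows "w \<in> span (V ` X)"
proof -
  obtain y z where y: "y \<in> span (V ` X)" and z: "\<And>u. u \<in> span (V ` X) \<Longrightarrow> orthogonal z u"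
    and w: "w = y + z" using orthogonal_subspace_decomp_exists[of "V ` X" w] by blast
  have "\<forall>x\<in>X. V x \<bullet> z = 0"
    using z span_base by (metis image_eqI inner_commute orthogonal_def)
  then have "w \<bullet> z = 0" by (rule assms)
  moreover have "y \<bullet> z = 0" using z[OF y] by (simp add: orthogonal_def inner_commute)
  ultimately have "z \<bullet> z = 0" using w by (simp add: inner_add_left)
  then have "z = 0" by simp
  then show ?thesis using w y by simp
qed

lemma sq_risk_Cons: "sq_risk ((x,y)#S) u = (1/2) * (u x - y)^2 + sq_risk S u"
  by (simp add: sq_risk_def algebra_simps)

lemma sq_risk_Nil: "sq_risk [] u = 0"
  by (simp add: sq_risk_def)

lemma deriv_sq_risk:
  assumes "is_model h"
  shows "((\<lambda>t. sq_risk S (\<lambda>x. h x t)) has_derivative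
           (\<lambda>v. \<Sum>(x,y)\<leftarrow>S. (h x \<theta> - y) * (Dv h \<theta> x \<bullet> v))) (at \<theta>)"
proof (induction S)
  case Nil
  then show ?case by (simp add: sq_risk_Nil)
next
  case (Cons p S)
  obtain x y where p: "p = (x,y)" by fastforce
  have hd: "((\<lambda>t. h x t) has_derivative (\<lambda>v. Dv h \<theta> x \<bullet> v)) (at \<theta>)"
  proof -
    have "frechet_derivative (\<lambda>t. h x t) (at \<theta>) = (\<lambda>v. Dv h \<theta> x \<bullet> v)"
      using D_inner[OF assms, of x \<theta>] by (intro ext) simp
    then show ?thesis using model_hd[OF assms, of x \<theta>] by simp
  qed
  have d1: "((\<lambda>t. (1/2) * (h x t - y)^2) has_derivative
      (\<lambda>v. (h x \<theta> - y) * (Dv h \<theta> x \<bullet> v))) (at \<theta>)"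
    by (rule derivative_eq_intros hd | simp add: mult.commute)+
  show ?case unfolding p sq_risk_Cons
    using has_derivative_add[OF d1 Cons.IH] by (simp add: p)
qed

lemma crit_transfer:
  fixes f :: "real^'d \<Rightarrow> real^'ma \<Rightarrow> real" and g :: "real^'d \<Rightarrow> real^'mb \<Rightarrow> real"
  assumes "is_model f" "is_model g" "critical_mapping f g P"
    and "\<And>v. (\<Sum>(x,c)\<leftarrow>L. c * (Dv f \<theta> x \<bullet> v)) = 0"
  shows "(\<Sum>(x,c)\<leftarrow>L. c * (Dv g (P \<theta>) x \<bullet> w)) = 0"
proof -
  have eqf: "\<And>x. g x (P \<theta>) = f x \<theta>" using assms(3) unfolding critical_mapping_def by metis
  define S where "S = map (\<lambda>(x,c). (x, f x \<theta> - c)) L"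
  have sf: "\<And>v. (\<Sum>(x,y)\<leftarrow>S. (f x \<theta> - y) * (Dv f \<theta> x \<bullet> v)) = (\<Sum>(x,c)\<leftarrow>L. c * (Dv f \<theta> x \<bullet> v))"
    unfolding S_def by (induction L) auto
  have sg: "\<And>v. (\<Sum>(x,y)\<leftarrow>S. (g x (P \<theta>) - y) * (Dv g (P \<theta>) x \<bullet> v)) = (\<Sum>(x,c)\<leftarrow>L. c * (Dv g (P \<theta>) x \<bullet> v))"
    unfolding S_def by (induction L) (auto simp: eqf)
  have "((\<lambda>t. sq_risk S (\<lambda>x. f x t)) has_derivative (\<lambda>_. 0)) (at \<theta>)"
    using deriv_sq_risk[OF assms(1), of S \<theta>] by (simp add: sf assms(4))
  then have "((\<lambda>t. sq_risk S (\<lambda>x. g x t)) has_derivative (\<lambda>_. 0)) (at (P \<theta>))"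
    using assms(3) unfolding critical_mapping_def by blast
  from has_derivative_unique[OF this deriv_sq_risk[OF assms(2), of S "P \<theta>"]]
  have "(\<lambda>v. (\<Sum>(x,c)\<leftarrow>L. c * (Dv g (P \<theta>) x \<bullet> v))) = (\<lambda>_. 0)"
    by (simp add: sg)
  then show ?thesis by metis
qed

lemma tangent_eq:
  assumes "is_model h"
  shows "tangent_hyperplane h \<theta>' = {u. \<exists>a. u = (\<lambda>x. h x \<theta>' + Dv h \<theta>' x \<bullet> a)}"
  by (simp add: tangent_hyperplane_def D_inner[OF assms])

lemma emp_nonneg: "admissible_loss l \<Longrightarrow> 0 \<le> emp_loss l fstar xs u"
  unfolding emp_loss_def admissible_loss_def
  by (intro divide_nonneg_nonneg sum_list_nonneg) auto

lemma emp_zero: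
  assumes "admissible_loss l" "\<forall>x\<in>set xs. u x = fstar x"
  shows "emp_loss l fstar xs u = 0"
proof -
  have "(\<Sum>x\<leftarrow>xs. l (u x) (fstar x)) = (\<Sum>x\<leftarrow>xs. 0)"
    by (rule arg_cong[where f=sum_list], rule map_cong) (use assms in \<open>auto simp: admissible_loss_def\<close>)
  then show ?thesis unfolding emp_loss_def by simp
qed

lemma emp_zero_imp:
  assumes "admissible_loss l" "emp_loss l fstar xs u \<le> 0"
  shows "\<forall>x\<in>set xs. u x = fstar x"
proof (cases "xs = []")
  case True then show ?thesis by simp
next
  case False
  have nn: "\<And>z. z \<in> set (map (\<lambda>x. l (u x) (fstar x)) xs) \<Longrightarrow> 0 \<le> z"
    using assms(1) by (auto simp: admissible_loss_def)
  have pos: "real (length xs) > 0" using False by simp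
  have "(\<Sum>x\<leftarrow>xs. l (u x) (fstar x)) \<le> 0"
    using assms(2) pos unfolding emp_loss_def by (simp add: divide_le_0_iff)
  moreover have "(\<Sum>x\<leftarrow>xs. l (u x) (fstar x)) \<ge> 0" using nn by (rule sum_list_nonneg)
  ultimately have "(\<Sum>x\<leftarrow>xs. l (u x) (fstar x)) = 0" by simp
  then have "\<forall>z\<in>set (map (\<lambda>x. l (u x) (fstar x)) xs). z = 0"
    using sum_list_nonneg_eq_0_iff[OF nn] by blast
  then show ?thesis using assms(1) by (auto simp: admissible_loss_def)
qed

lemma llr_intro:
  assumes h: "is_model h" and l: "admissible_loss l" and t: "\<theta>' \<in> target_set h fstar"
    and K: "\<And>a. (\<forall>x\<in>set xs. Dv h \<theta>' x \<bullet> a = 0) \<Longrightarrow> (\<forall>z. Dv h \<theta>' z \<bullet> a = 0)"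
  shows "has_LLR_guarantee l h fstar (length xs)"
  unfolding has_LLR_guarantee_def
proof (intro exI conjI)
  have fs: "fstar = (\<lambda>x. h x \<theta>')" using t by (simp add: target_set_def)
  have fT: "fstar \<in> tangent_hyperplane h \<theta>'"
    unfolding tangent_eq[OF h] by (auto intro!: exI[of _ 0] simp: fs)
  have E0: "emp_loss l fstar xs fstar = 0" using emp_zero[OF l] by blast
  show "{u \<in> tangent_hyperplane h \<theta>'. \<forall>v\<in>tangent_hyperplane h \<theta>'.
          emp_loss l fstar xs u \<le> emp_loss l fstar xs v} = {fstar}"
  proof (intro equalityI subsetI)
    fix u assume "u \<in> {u \<in> tangent_hyperplane h \<theta>'. \<forall>v\<in>tangent_hyperplane h \<theta>'.
          emp_loss l fstar xs u \<le> emp_loss l fstar xs v}"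
    then have uT: "u \<in> tangent_hyperplane h \<theta>'" and le: "emp_loss l fstar xs u \<le> 0"
      using fT E0 by auto
    obtain a where ua: "u = (\<lambda>x. h x \<theta>' + Dv h \<theta>' x \<bullet> a)" using uT unfolding tangent_eq[OF h] by auto
    have "\<forall>x\<in>set xs. u x = fstar x" by (rule emp_zero_imp[OF l le])
    then have "\<forall>x\<in>set xs. Dv h \<theta>' x \<bullet> a = 0" by (simp add: ua fs)
    then have "\<forall>z. Dv h \<theta>' z \<bullet> a = 0" by (rule K)
    then show "u \<in> {fstar}" by (simp add: ua fs)
  next
    fix u assume "u \<in> {fstar}"
    then show "u \<in> {u \<in> tangent_hyperplane h \<theta>'. \<forall>v\<in>tangent_hyperplane h \<theta>'.
          emp_loss l fstar xs u \<le> emp_loss l fstar xs v}"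
      using fT E0 emp_nonneg[OF l] by auto
  qed
qed (use t in auto)

lemma llr_elim:
  assumes h: "is_model h" and l: "admissible_loss l" and g: "has_LLR_guarantee l h fstar n"
  obtains xs \<theta>' where "length xs = n" "\<theta>' \<in> target_set h fstar"
    "\<And>a. (\<forall>x\<in>set xs. Dv h \<theta>' x \<bullet> a = 0) \<Longrightarrow> (\<forall>z. Dv h \<theta>' z \<bullet> a = 0)"
proof -
  obtain xs \<theta>' where len: "length xs = n" and t: "\<theta>' \<in> target_set h fstar" and
    eq: "{u \<in> tangent_hyperplane h \<theta>'. \<forall>v \<in> tangent_hyperplane h \<theta>'.
            emp_loss l fstar xs u \<le> emp_loss l fstar xs v} = {fstar}"
    using g unfolding has_LLR_guarantee_def by blast
  have fs: "fstar = (\<lambda>x. h x \<theta>')" using t by (simp add: target_set_def)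
  have K: "\<forall>z. Dv h \<theta>' z \<bullet> a = 0" if a: "\<forall>x\<in>set xs. Dv h \<theta>' x \<bullet> a = 0" for a
  proof -
    define u where "u = (\<lambda>x. h x \<theta>' + Dv h \<theta>' x \<bullet> a)"
    have uT: "u \<in> tangent_hyperplane h \<theta>'" unfolding tangent_eq[OF h] u_def by auto
    have "emp_loss l fstar xs u = 0" using a by (intro emp_zero[OF l]) (simp add: u_def fs)
    then have "u \<in> {u \<in> tangent_hyperplane h \<theta>'. \<forall>v \<in> tangent_hyperplane h \<theta>'.
            emp_loss l fstar xs u \<le> emp_loss l fstar xs v}"
      using uT emp_nonneg[OF l] by auto
    then have "u = fstar" using eq by blast
    then show ?thesis unfolding u_def fs by (metis add_cancel_left_right)
  qed
  show ?thesis using that len t K by blast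
qed

lemma guarantee_exists:
  fixes h :: "real^'d \<Rightarrow> real^'m \<Rightarrow> real"
  assumes h: "is_model h" and l: "admissible_loss l" and fs: "fstar \<in> fun_space h"
  shows "\<exists>n. n \<le> CARD('m) \<and> has_LLR_guarantee l h fstar n"
proof -
  obtain \<theta> where th: "fstar = (\<lambda>x. h x \<theta>)" using fs by (auto simp: fun_space_def)
  have t: "\<theta> \<in> target_set h fstar" by (simp add: target_set_def th)
  obtain B where B: "B \<subseteq> range (Dv h \<theta>)" "independent B" "range (Dv h \<theta>) \<subseteq> span B"
    by (rule basis_exists)
  have fin: "finite B" and cardB: "card B \<le> CARD('m)"
    using independent_bound[OF B(2)] by auto
  obtain bs where bs: "set bs = B" "distinct bs" using finite_distinct_list[OF fin] by blast
  define xs where "xs = map (\<lambda>b. SOME x. Dv h \<theta> x = b) bs"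
  have len: "length xs = card B" using bs distinct_card[of bs] by (simp add: xs_def)
  have K: "\<forall>z. Dv h \<theta> z \<bullet> a = 0" if a: "\<forall>x\<in>set xs. Dv h \<theta> x \<bullet> a = 0" for a
  proof
    fix z
    have "\<forall>b\<in>B. orthogonal a b"
    proof
      fix b assume "b \<in> B"
      then have "b \<in> range (Dv h \<theta>)" using B(1) by auto
      then have "Dv h \<theta> (SOME x. Dv h \<theta> x = b) = b" by (metis (mono_tags, lifting) rangeE someI)
      moreover have "(SOME x. Dv h \<theta> x = b) \<in> set xs" using \<open>b \<in> B\<close> bs by (auto simp: xs_def)
      ultimately show "orthogonal a b" using a by (metis inner_commute orthogonal_def)
    qed
    moreover have "Dv h \<theta> z \<in> span B" using B(3) by auto
    ultimately have "orthogonal a (Dv h \<theta> z)" using orthogonal_to_span by blast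
    then show "Dv h \<theta> z \<bullet> a = 0" by (simp add: orthogonal_def inner_commute)
  qed
  have "has_LLR_guarantee l h fstar (length xs)" by (rule llr_intro[OF h l t K]) blast
  then show ?thesis using len cardB by auto
qed

theorem mainTheorem10:
  fixes f :: "real^'d \<Rightarrow> real^'ma \<Rightarrow> real"
    and g :: "real^'d \<Rightarrow> real^'mb \<Rightarrow> real"
    and l :: "real \<Rightarrow> real \<Rightarrow> real"
    and fstar :: "real^'d \<Rightarrow> real"
  assumes "is_model f" and "is_model g"
    and "\<exists>P. critical_mapping f g P"
    and "admissible_loss l"
    and "fstar \<in> fun_space f"
  shows "fstar \<in> fun_space g \<and>
         optimistic_sample_size l g fstar \<le> optimistic_sample_size l f fstar \<and>
         optimistic_sample_size l f fstar \<le> enat CARD('ma)"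
proof (intro conjI)
  obtain P where P: "critical_mapping f g P" using assms(3) by blast
  have eqf: "\<And>\<theta>. (\<lambda>x. f x \<theta>) = (\<lambda>x. g x (P \<theta>))" using P unfolding critical_mapping_def by blast
  show "fstar \<in> fun_space g" using assms(5) eqf by (auto simp: fun_space_def)
  obtain n where n: "n \<le> CARD('ma)" "has_LLR_guarantee l f fstar n"
    using guarantee_exists[OF assms(1,4,5)] by blast
  have ex: "\<exists>n. has_LLR_guarantee l f fstar n" using n by blast
  have "(LEAST n. has_LLR_guarantee l f fstar n) \<le> n" using n(2) by (rule Least_le)
  then show "optimistic_sample_size l f fstar \<le> enat CARD('ma)"
    using n(1) ex by (simp add: optimistic_sample_size_def)
  define m where "m = (LEAST n. has_LLR_guarantee l f fstar n)"
  have gm: "has_LLR_guarantee l f fstar m" unfolding m_def using ex by (rule LeastI_ex)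
  obtain xs \<theta>' where len: "length xs = m" and t: "\<theta>' \<in> target_set f fstar"
    and Kf: "\<And>a. (\<forall>x\<in>set xs. Dv f \<theta>' x \<bullet> a = 0) \<Longrightarrow> (\<forall>z. Dv f \<theta>' z \<bullet> a = 0)"
    using llr_elim[OF assms(1,4) gm] by blast
  have tg: "P \<theta>' \<in> target_set g fstar" using t eqf by (simp add: target_set_def)
  have Kg: "\<forall>z. Dv g (P \<theta>') z \<bullet> b = 0" if b: "\<forall>x\<in>set xs. Dv g (P \<theta>') x \<bullet> b = 0" for b
  proof
    fix z
    have "Dv f \<theta>' z \<in> span (Dv f \<theta>' ` set xs)"
      by (rule ker_span) (use Kf in \<open>auto simp: inner_commute\<close>)
    then obtain c where c: "Dv f \<theta>' z = (\<Sum>x\<in>set xs. c x *\<^sub>R Dv f \<theta>' x)"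
      using span_comb[of "set xs"] by blast
    define L where "L = map (\<lambda>x. (x, c x)) (remdups xs) @ [(z, -1)]"
    have Lsum: "(\<Sum>(x,d)\<leftarrow>L. d * (Dv h \<theta> x \<bullet> v)) =
        (\<Sum>x\<in>set xs. c x * (Dv h \<theta> x \<bullet> v)) - Dv h \<theta> z \<bullet> v"
      for h :: "real^'d \<Rightarrow> real^'m \<Rightarrow> real" and \<theta> v
      by (simp add: L_def sum.set_conv_list o_def)
    have "(\<Sum>(x,d)\<leftarrow>L. d * (Dv f \<theta>' x \<bullet> v)) = 0" for v
      unfolding Lsum c by (simp add: inner_sum_left)
    from crit_transfer[OF assms(1,2) P this, of b]
    have "(\<Sum>x\<in>set xs. c x * (Dv g (P \<theta>') x \<bullet> b)) - Dv g (P \<theta>') z \<bullet> b = 0"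
      by (simp add: Lsum)
    moreover have "(\<Sum>x\<in>set xs. c x * (Dv g (P \<theta>') x \<bullet> b)) = 0" using b by simp
    ultimately show "Dv g (P \<theta>') z \<bullet> b = 0" by simp
  qed
  have gg: "has_LLR_guarantee l g fstar m" using llr_intro[OF assms(2,4) tg Kg] len by blast
  from gg have "(LEAST n. has_LLR_guarantee l g fstar n) \<le> m" by (rule Least_le)
  then show "optimistic_sample_size l g fstar \<le> optimistic_sample_size l f fstar"
    using ex gg m_def by (auto simp: optimistic_sample_size_def)
qed

end
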